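(* Let $\mu,\nu\in\mathbb{R}$. Identify $\mathbb{R}[[\tau]]$ with $\mathbb{R}[[\sigma]]$ via $\tau\mapsto\sigma$. Then the assignment $$H\mapsto P,\quad P\mapsto H,\quad K\mapsto K,\quad D\mapsto D,\quad C_1\mapsto -C_2,\quad C_2\mapsto -C_1$$ extends to an isomorphism of algebras $U_\tau(so_{\mu,\nu}(2,2))\to U_\sigma(so_{\nu,\mu}(2,2))$ which intertwines the coproducts, i.e. an isomorphism of bialgebras.
   Context: For real parameters $a,b$: $U_\tau(so_{a,b}(2,2))$ is the $\tau$-adically completed algebra over $\mathbb{R}[[\tau]]$ generated by $H,P,K,D,C_1,C_2$ with relations $[K,H]=b e^{-\tau H}P$, $[K,P]=a\frac{e^{\tau H}-1}{\tau}$, $[H,P]=0$, $[K,D]=0$, $[D,H]=\frac{1-e^{-\tau H}}{\tau}$, $[D,C_1]=-C_1+\tau b D^2$, $[H,C_1]=-2bD$, $[D,P]=P$, $[D,C_2]=-C_2$, $[P,C_2]=2aD$, $[K,C_1]=bC_2$, $[K,C_2]=aC_1-\tau abD^2$, $[H,C_2]=e^{-\tau H}K+Ke^{-\tau H}$, $[P,C_1]=-2K-\tau b(DP+PD)$, $[C_1,C_2]=-\tau b(DC_2+C_2D)$, and coproduct $\Delta(H)=1\otimes H+H\otimes 1$, $\Delta(D)=1\otimes D+D\otimes e^{-\tau H}$, $\Delta(P)=1\otimes P+P\otimes e^{\tau H}$, $\Delta(C_1)=1\otimes C_1+C_1\otimes e^{-\tau H}$, $\Delta(K)=1\otimes K+K\otimes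 1-\tau bD\otimes e^{-\tau H}P$, $\Delta(C_2)=1\otimes C_2+C_2\otimes e^{-\tau H}+2\tau D\otimes e^{-\tau H}K-\tau^2b(D^2+D)\otimes e^{-2\tau H}P$. $U_\sigma(so_{a,b}(2,2))$ is the $\sigma$-adically completed algebra over $\mathbb{R}[[\sigma]]$ generated by $H,P,K,D,C_1,C_2$ with relations $[K,H]=b\frac{e^{\sigma P}-1}{\sigma}$, $[K,P]=ae^{-\sigma P}H$, $[H,P]=0$, $[K,D]=0$, $[D,H]=H$, $[D,C_1]=-C_1$, $[H,C_1]=-2bD$, $[D,P]=\frac{1-e^{-\sigma P}}{\sigma}$, $[D,C_2]=-C_2-\sigma aD^2$, $[P,C_2]=2aD$, $[K,C_1]=bC_2+\sigma abD^2$, $[K,C_2]=aC_1$, $[P,C_1]=-e^{-\sigma P}K-Ke^{-\sigma P}$, $[H,C_2]=2K+\sigma a(DH+HD)$, $[C_1,C_2]=-\sigma a(DC_1+C_1D)$, and coproduct $\Delta(P)=1\otimes P+P\otimes 1$, $\Delta(D)=1\otimes D+D\otimes e^{-\sigma P}$, $\Delta(H)=1\otimes H+H\otimes e^{\sigma P}$, $\Delta(C_2)=1\otimes C_2+C_2\otimes e^{-\sigma P}$, $\Delta(K)=1\otimes K+K\otimes 1-\sigma aD\otimes e^{-\sigma P}H$, $\Delta(C_1)=1\otimes C_1+C_1\otimes e^{-\sigma P}-2\sigma D\otimes e^{-\sigma P}K+\sigma^2a(D^2+D)\otimes e^{-2\sigma P}H$. *)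

theory Defs
  imports Complex_Main
begin

datatype gen = Hg | Pg | Kg | Dg | C1g | C2g

text \<open>An element is written as a formal sum over n and words w of coefficients
  F n w times t^n w, where t is the central formal parameter (tau resp. sigma, identified).
  The tau-adic completion of the free R[[t]]-algebra consists of those F such that for
  each n only finitely many words have nonzero coefficient.\<close>

type_synonym ncps = "nat \<Rightarrow> gen list \<Rightarrow> real"

definition Alg :: "ncps set" where
  "Alg = {F. \<forall>n. finite {w. F n w \<noteq> 0}}"

definition pzero :: ncps where "pzero = (\<lambda>n w. 0)"
definition pone :: ncps where "pone = (\<lambda>n w. if n = 0 \<and> w = [] then 1 else 0)"
definition padd :: "ncps \<Rightarrow> ncps \<Rightarrow> ncps" where "padd F G = (\<lambda>n w. F n w + G n w)"
definition psub :: "ncps \<Rightarrow> ncps \<Rightarrow> ncps" where "psub F G = (\<lambda>n w. F n w - G n w)"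
definition pscal :: "real \<Rightarrow> ncps \<Rightarrow> ncps" where "pscal c F = (\<lambda>n w. c * F n w)"
definition pmul :: "ncps \<Rightarrow> ncps \<Rightarrow> ncps" where
  "pmul F G = (\<lambda>n w. \<Sum>i\<le>n. \<Sum>k\<le>length w. F i (take k w) * G (n - i) (drop k w))"

definition pgen :: "gen \<Rightarrow> ncps" where "pgen g = (\<lambda>n w. if n = 0 \<and> w = [g] then 1 else 0)"
definition ptau :: ncps where "ptau = (\<lambda>n w. if n = 1 \<and> w = [] then 1 else 0)"

text \<open>pexp c g is the series exp(c t g) = sum_n (c t g)^n / n!.\<close>
definition pexp :: "real \<Rightarrow> gen \<Rightarrow> ncps" where
  "pexp c g = (\<lambda>n w. if w = replicate n g then c ^ n / fact n else 0)"

text \<open>Division by t of an element whose t^0-part vanishes.\<close>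
definition pdivt :: "ncps \<Rightarrow> ncps" where "pdivt F = (\<lambda>n w. F (Suc n) w)"

definition pcomm :: "ncps \<Rightarrow> ncps \<Rightarrow> ncps" where "pcomm X Y = psub (pmul X Y) (pmul Y X)"

inductive_set ideal_span :: "ncps set \<Rightarrow> ncps set" for R where
  zero: "pzero \<in> ideal_span R"
| step: "\<lbrakk>a \<in> Alg; r \<in> R; b \<in> Alg; F \<in> ideal_span R\<rbrakk>
          \<Longrightarrow> padd (pmul (pmul a r) b) F \<in> ideal_span R"

definition tclosure :: "ncps set \<Rightarrow> ncps set" where
  "tclosure S = {F \<in> Alg. \<forall>N. \<exists>G\<in>S. \<forall>n<N. \<forall>w. F n w = G n w}"

definition relideal :: "ncps set \<Rightarrow> ncps set" where
  "relideal R = tclosure (ideal_span R)"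

definition congr :: "ncps set \<Rightarrow> (ncps \<times> ncps) set" where
  "congr R = {(x, y). x \<in> Alg \<and> y \<in> Alg \<and> psub x y \<in> relideal R}"

definition presented :: "ncps set \<Rightarrow> ncps set set" where
  "presented R = Alg // congr R"

definition wordval :: "(gen \<Rightarrow> ncps) \<Rightarrow> gen list \<Rightarrow> ncps" where
  "wordval f w = foldr (\<lambda>g acc. pmul (f g) acc) w pone"

definition ext1 :: "(gen \<Rightarrow> ncps) \<Rightarrow> ncps \<Rightarrow> ncps" where
  "ext1 f F = (\<lambda>m v. \<Sum>n\<le>m. \<Sum>w\<in>{w. F n w \<noteq> 0}. F n w * wordval f w (m - n) v)"

section \<open>Completed tensor square over R[[t]]\<close>

type_synonym ncps2 = "nat \<Rightarrow> gen list \<Rightarrow> gen list \<Rightarrow> real"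

definition Alg2 :: "ncps2 set" where
  "Alg2 = {F. \<forall>n. finite {(u, v). F n u v \<noteq> 0}}"

definition pzero2 :: ncps2 where "pzero2 = (\<lambda>n u v. 0)"
definition padd2 :: "ncps2 \<Rightarrow> ncps2 \<Rightarrow> ncps2" where "padd2 F G = (\<lambda>n u v. F n u v + G n u v)"
definition psub2 :: "ncps2 \<Rightarrow> ncps2 \<Rightarrow> ncps2" where "psub2 F G = (\<lambda>n u v. F n u v - G n u v)"
definition pmul2 :: "ncps2 \<Rightarrow> ncps2 \<Rightarrow> ncps2" where
  "pmul2 F G = (\<lambda>n u v. \<Sum>i\<le>n. \<Sum>k\<le>length u. \<Sum>l\<le>length v.
      F i (take k u) (take l v) * G (n - i) (drop k u) (drop l v))"

text \<open>Elementary tensor x \<otimes> y (over R[[t]], t central).\<close>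
definition tens :: "ncps \<Rightarrow> ncps \<Rightarrow> ncps2" where
  "tens F G = (\<lambda>n u v. \<Sum>i\<le>n. F i u * G (n - i) v)"

definition pone2 :: ncps2 where "pone2 = tens pone pone"

definition wordval2 :: "(gen \<Rightarrow> ncps2) \<Rightarrow> gen list \<Rightarrow> ncps2" where
  "wordval2 f w = foldr (\<lambda>g acc. pmul2 (f g) acc) w pone2"

definition ext2 :: "(gen \<Rightarrow> ncps2) \<Rightarrow> ncps \<Rightarrow> ncps2" where
  "ext2 f F = (\<lambda>m u v. \<Sum>n\<le>m. \<Sum>w\<in>{w. F n w \<noteq> 0}. F n w * wordval2 f w (m - n) u v)"

text \<open>Tensor product map f \<otimes> f of the algebra map extending f.\<close>
definition tensext :: "(gen \<Rightarrow> ncps) \<Rightarrow> ncps2 \<Rightarrow> ncps2" where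
  "tensext f F = (\<lambda>m a b. \<Sum>n\<le>m. \<Sum>p\<in>{(u, v). F n u v \<noteq> 0}.
      F n (fst p) (snd p) * tens (wordval f (fst p)) (wordval f (snd p)) (m - n) a b)"

inductive_set tideal_span :: "ncps set \<Rightarrow> ncps2 set" for I where
  zero: "pzero2 \<in> tideal_span I"
| left: "\<lbrakk>x \<in> I; y \<in> Alg; F \<in> tideal_span I\<rbrakk> \<Longrightarrow> padd2 (tens x y) F \<in> tideal_span I"
| right: "\<lbrakk>x \<in> Alg; y \<in> I; F \<in> tideal_span I\<rbrakk> \<Longrightarrow> padd2 (tens x y) F \<in> tideal_span I"

definition tclosure2 :: "ncps2 set \<Rightarrow> ncps2 set" where
  "tclosure2 S = {F \<in> Alg2. \<forall>N. \<exists>G\<in>S. \<forall>n<N. \<forall>u v. F n u v = G n u v}"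

text \<open>Kernel of A\<otimes>A \<rightarrow> U\<otimes>U (completed), i.e. closure of I\<otimes>A + A\<otimes>I.\<close>
definition tensideal :: "ncps set \<Rightarrow> ncps2 set" where
  "tensideal R = tclosure2 (tideal_span (relideal R))"

abbreviation "gH \<equiv> pgen Hg"
abbreviation "gP \<equiv> pgen Pg"
abbreviation "gK \<equiv> pgen Kg"
abbreviation "gD \<equiv> pgen Dg"
abbreviation "gC1 \<equiv> pgen C1g"
abbreviation "gC2 \<equiv> pgen C2g"

definition rel :: "ncps \<Rightarrow> ncps \<Rightarrow> ncps" where "rel l r = psub l r"

definition rels_tau :: "real \<Rightarrow> real \<Rightarrow> ncps set" where
  "rels_tau a b = {
     rel (pcomm gK gH) (pscal b (pmul (pexp (-1) Hg) gP)),
     rel (pcomm gK gP) (pscal a (pdivt (psub (pexp 1 Hg) pone))),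
     rel (pcomm gH gP) pzero,
     rel (pcomm gK gD) pzero,
     rel (pcomm gD gH) (pdivt (psub pone (pexp (-1) Hg))),
     rel (pcomm gD gC1) (padd (pscal (-1) gC1) (pscal b (pmul ptau (pmul gD gD)))),
     rel (pcomm gH gC1) (pscal (-2 * b) gD),
     rel (pcomm gD gP) gP,
     rel (pcomm gD gC2) (pscal (-1) gC2),
     rel (pcomm gP gC2) (pscal (2 * a) gD),
     rel (pcomm gK gC1) (pscal b gC2),
     rel (pcomm gK gC2) (psub (pscal a gC1) (pscal (a * b) (pmul ptau (pmul gD gD)))),
     rel (pcomm gH gC2) (padd (pmul (pexp (-1) Hg) gK) (pmul gK (pexp (-1) Hg))),
     rel (pcomm gP gC1) (psub (pscal (-2) gK) (pscal b (pmul ptau (padd (pmul gD gP) (pmul gP gD))))),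
     rel (pcomm gC1 gC2) (pscal (- b) (pmul ptau (padd (pmul gD gC2) (pmul gC2 gD))))}"

definition rels_sigma :: "real \<Rightarrow> real \<Rightarrow> ncps set" where
  "rels_sigma a b = {
     rel (pcomm gK gH) (pscal b (pdivt (psub (pexp 1 Pg) pone))),
     rel (pcomm gK gP) (pscal a (pmul (pexp (-1) Pg) gH)),
     rel (pcomm gH gP) pzero,
     rel (pcomm gK gD) pzero,
     rel (pcomm gD gH) gH,
     rel (pcomm gD gC1) (pscal (-1) gC1),
     rel (pcomm gH gC1) (pscal (-2 * b) gD),
     rel (pcomm gD gP) (pdivt (psub pone (pexp (-1) Pg))),
     rel (pcomm gD gC2) (psub (pscal (-1) gC2) (pscal a (pmul ptau (pmul gD gD)))),
     rel (pcomm gP gC2) (pscal (2 * a) gD),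
     rel (pcomm gK gC1) (padd (pscal b gC2) (pscal (a * b) (pmul ptau (pmul gD gD)))),
     rel (pcomm gK gC2) (pscal a gC1),
     rel (pcomm gP gC1) (psub (pscal (-1) (pmul (pexp (-1) Pg) gK)) (pmul gK (pexp (-1) Pg))),
     rel (pcomm gH gC2) (padd (pscal 2 gK) (pscal a (pmul ptau (padd (pmul gD gH) (pmul gH gD))))),
     rel (pcomm gC1 gC2) (pscal (- a) (pmul ptau (padd (pmul gD gC1) (pmul gC1 gD))))}"

fun cop_tau :: "real \<Rightarrow> real \<Rightarrow> gen \<Rightarrow> ncps2" where
  "cop_tau a b Hg = padd2 (tens pone gH) (tens gH pone)"
| "cop_tau a b Dg = padd2 (tens pone gD) (tens gD (pexp (-1) Hg))"
| "cop_tau a b Pg = padd2 (tens pone gP) (tens gP (pexp 1 Hg))"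
| "cop_tau a b C1g = padd2 (tens pone gC1) (tens gC1 (pexp (-1) Hg))"
| "cop_tau a b Kg = psub2 (padd2 (tens pone gK) (tens gK pone))
                        (tens (pscal b (pmul ptau gD)) (pmul (pexp (-1) Hg) gP))"
| "cop_tau a b C2g = psub2 (padd2 (padd2 (tens pone gC2) (tens gC2 (pexp (-1) Hg)))
                                  (tens (pscal 2 (pmul ptau gD)) (pmul (pexp (-1) Hg) gK)))
                          (tens (pscal b (pmul ptau (pmul ptau (padd (pmul gD gD) gD))))
                                (pmul (pexp (-2) Hg) gP))"

fun cop_sigma :: "real \<Rightarrow> real \<Rightarrow> gen \<Rightarrow> ncps2" where
  "cop_sigma a b Pg = padd2 (tens pone gP) (tens gP pone)"
| "cop_sigma a b Dg = padd2 (tens pone gD) (tens gD (pexp (-1) Pg))"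
| "cop_sigma a b Hg = padd2 (tens pone gH) (tens gH (pexp 1 Pg))"
| "cop_sigma a b C2g = padd2 (tens pone gC2) (tens gC2 (pexp (-1) Pg))"
| "cop_sigma a b Kg = psub2 (padd2 (tens pone gK) (tens gK pone))
                        (tens (pscal a (pmul ptau gD)) (pmul (pexp (-1) Pg) gH))"
| "cop_sigma a b C1g = padd2 (psub2 (padd2 (tens pone gC1) (tens gC1 (pexp (-1) Pg)))
                                  (tens (pscal 2 (pmul ptau gD)) (pmul (pexp (-1) Pg) gK)))
                          (tens (pscal a (pmul ptau (pmul ptau (padd (pmul gD gD) gD))))
                                (pmul (pexp (-2) Pg) gH))"

fun swap_assign :: "gen \<Rightarrow> ncps" where
  "swap_assign Hg = gP"
| "swap_assign Pg = gH"
| "swap_assign Kg = gK"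
| "swap_assign Dg = gD"
| "swap_assign C1g = pscal (-1) gC2"
| "swap_assign C2g = pscal (-1) gC1"

end

theory Submission
  imports Defs
begin


fun swg :: "gen \<Rightarrow> gen" where
  "swg Hg = Pg" | "swg Pg = Hg" | "swg Kg = Kg" | "swg Dg = Dg" | "swg C1g = C2g" | "swg C2g = C1g"

fun sg :: "gen \<Rightarrow> real" where
  "sg C1g = -1" | "sg C2g = -1" | "sg Hg = 1" | "sg Pg = 1" | "sg Kg = 1" | "sg Dg = 1"

definition wsg :: "gen list \<Rightarrow> real" where "wsg w = prod_list (map sg w)"

definition phi :: "ncps \<Rightarrow> ncps" where "phi F = (\<lambda>n v. wsg v * F n (map swg v))"

lemma swg_swg[simp]: "swg (swg g) = g" by (cases g) auto
lemma swg_comp[simp]: "swg \<circ> swg = id" by (auto simp: fun_eq_iff)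
lemma sw_sw[simp]: "map swg (map swg v) = v" by (induct v) auto
lemma sg_swg[simp]: "sg (swg g) = sg g" by (cases g) auto
lemma sg_sq[simp]: "sg g * sg g = 1" by (cases g) auto
lemma sg_nz[simp]: "sg g \<noteq> 0" by (cases g) auto
lemma wsg_sw[simp]: "wsg (map swg v) = wsg v" by (induct v) (auto simp: wsg_def)
lemma wsg_sq[simp]: "wsg v * wsg v = 1"
proof (induct v)
  case Nil then show ?case by (simp add: wsg_def)
next
  case (Cons a v)
  have "wsg (a # v) * wsg (a # v) = (sg a * sg a) * (wsg v * wsg v)" by (simp add: wsg_def algebra_simps)
  then show ?case using Cons by simp
qed
lemma wsg_nz[simp]: "wsg v \<noteq> 0" by (metis wsg_sq mult_zero_left zero_neq_one)
lemma wsg_append: "wsg (u @ v) = wsg u * wsg v" by (simp add: wsg_def)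
lemma wsg_Nil[simp]: "wsg [] = 1" by (simp add: wsg_def)
lemma wsg_Cons[simp]: "wsg (g # v) = sg g * wsg v" by (simp add: wsg_def)
lemma sw_inj[simp]: "(map swg u = map swg v) = (u = v)"
  by (metis sw_sw)
lemma sw_eq_iff: "(map swg u = v) = (u = map swg v)" by auto
lemma wsg_take_drop: "wsg (take k w) * wsg (drop k w) = wsg w"
  by (metis append_take_drop_id wsg_append)

lemma phi_phi[simp]: "phi (phi F) = F"
  by (simp add: phi_def mult.assoc[symmetric])

lemma phi_padd[simp]: "phi (padd X Y) = padd (phi X) (phi Y)"
  by (simp add: phi_def padd_def fun_eq_iff algebra_simps)
lemma phi_psub[simp]: "phi (psub X Y) = psub (phi X) (phi Y)"
  by (simp add: phi_def psub_def fun_eq_iff algebra_simps)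
lemma phi_pscal[simp]: "phi (pscal c X) = pscal c (phi X)"
  by (simp add: phi_def pscal_def fun_eq_iff algebra_simps)
lemma phi_pzero[simp]: "phi pzero = pzero"
  by (simp add: phi_def pzero_def)
lemma phi_pone[simp]: "phi pone = pone"
  by (auto simp add: phi_def pone_def fun_eq_iff)
lemma phi_ptau[simp]: "phi ptau = ptau"
  by (auto simp add: phi_def ptau_def fun_eq_iff)
lemma phi_pdivt[simp]: "phi (pdivt X) = pdivt (phi X)"
  by (simp add: phi_def pdivt_def)
lemma sw_replicate: "(map swg v = replicate n g) = (v = replicate n (swg g))"
  by (metis map_replicate sw_sw swg_swg)
lemma wsg_replicate: "wsg (replicate n g) = sg g ^ n"
  by (induct n) auto
lemma phi_pexp[simp]: "phi (pexp c Hg) = pexp c Pg"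
  by (auto simp add: phi_def pexp_def fun_eq_iff sw_replicate wsg_replicate)
lemma phi_pgen[simp]: "phi (pgen g) = swap_assign g"
  by (cases g) (auto simp add: phi_def pgen_def pscal_def fun_eq_iff sw_eq_iff)

lemma phi_pmul[simp]: "phi (pmul X Y) = pmul (phi X) (phi Y)"
proof (rule ext, rule ext)
  fix n w
  show "phi (pmul X Y) n w = pmul (phi X) (phi Y) n w"
    unfolding phi_def pmul_def
    apply (simp add: sum_distrib_left take_map drop_map)
    apply (intro sum.cong refl)
    subgoal for i k
      using wsg_take_drop[of k w] by (simp add: algebra_simps)
    done
qed
lemma phi_pcomm[simp]: "phi (pcomm X Y) = pcomm (phi X) (phi Y)"
  by (simp add: pcomm_def)



lemma pmul_pscal_l[simp]: "pmul (pscal c X) Y = pscal c (pmul X Y)"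
  by (simp add: pmul_def pscal_def sum_distrib_left mult.assoc)
lemma pmul_pscal_r[simp]: "pmul X (pscal c Y) = pscal c (pmul X Y)"
  by (simp add: pmul_def pscal_def sum_distrib_left algebra_simps)
lemma pmul_padd_l: "pmul (padd X Y) Z = padd (pmul X Z) (pmul Y Z)"
  by (simp add: pmul_def padd_def sum.distrib algebra_simps)
lemma pmul_padd_r: "pmul Z (padd X Y) = padd (pmul Z X) (pmul Z Y)"
  by (simp add: pmul_def padd_def sum.distrib algebra_simps)
lemma pmul_psub_l: "pmul (psub X Y) Z = psub (pmul X Z) (pmul Y Z)"
  by (simp add: pmul_def psub_def sum_subtractf algebra_simps)
lemma pmul_psub_r: "pmul Z (psub X Y) = psub (pmul Z X) (pmul Z Y)"
  by (simp add: pmul_def psub_def sum_subtractf algebra_simps)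

lemma Alg_iff: "F \<in> Alg \<longleftrightarrow> (\<forall>n. finite {w. F n w \<noteq> 0})" by (simp add: Alg_def)

lemma Alg_padd[simp]: "X \<in> Alg \<Longrightarrow> Y \<in> Alg \<Longrightarrow> padd X Y \<in> Alg"
  unfolding Alg_iff padd_def
proof
  fix n assume a: "\<forall>n. finite {w. X n w \<noteq> 0}" "\<forall>n. finite {w. Y n w \<noteq> 0}"
  have "{w. X n w + Y n w \<noteq> 0} \<subseteq> {w. X n w \<noteq> 0} \<union> {w. Y n w \<noteq> 0}" by auto
  then show "finite {w. X n w + Y n w \<noteq> 0}" using a by (meson finite_Un finite_subset)
qed
lemma Alg_psub[simp]: "X \<in> Alg \<Longrightarrow> Y \<in> Alg \<Longrightarrow> psub X Y \<in> Alg"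
  unfolding Alg_iff psub_def
proof
  fix n assume a: "\<forall>n. finite {w. X n w \<noteq> 0}" "\<forall>n. finite {w. Y n w \<noteq> 0}"
  have "{w. X n w - Y n w \<noteq> 0} \<subseteq> {w. X n w \<noteq> 0} \<union> {w. Y n w \<noteq> 0}" by auto
  then show "finite {w. X n w - Y n w \<noteq> 0}" using a by (meson finite_Un finite_subset)
qed
lemma Alg_pscal[simp]: "X \<in> Alg \<Longrightarrow> pscal c X \<in> Alg"
  unfolding Alg_iff pscal_def
proof
  fix n assume a: "\<forall>n. finite {w. X n w \<noteq> 0}"
  have "{w. c * X n w \<noteq> 0} \<subseteq> {w. X n w \<noteq> 0}" by auto
  then show "finite {w. c * X n w \<noteq> 0}" using a by (meson finite_subset)
qed
lemma Alg_sub: "(\<And>n. {w. F n w \<noteq> 0} \<subseteq> S n) \<Longrightarrow> (\<And>n. finite (S n)) \<Longrightarrow> F \<in> Alg"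
  unfolding Alg_iff by (meson finite_subset)
lemma Alg_pzero[simp]: "pzero \<in> Alg" by (simp add: Alg_iff pzero_def)
lemma Alg_pone[simp]: "pone \<in> Alg"
proof -
  have "\<And>n. {w. pone n w \<noteq> 0} \<subseteq> {[]}" by (auto simp: pone_def)
  then show ?thesis by (rule Alg_sub) simp
qed
lemma Alg_ptau[simp]: "ptau \<in> Alg"
proof -
  have "\<And>n. {w. ptau n w \<noteq> 0} \<subseteq> {[]}" by (auto simp: ptau_def)
  then show ?thesis by (rule Alg_sub) simp
qed
lemma Alg_pgen[simp]: "pgen g \<in> Alg"
proof -
  have "\<And>n. {w. pgen g n w \<noteq> 0} \<subseteq> {[g]}" by (auto simp: pgen_def)
  then show ?thesis by (rule Alg_sub) simp
qed
lemma Alg_pexp[simp]: "pexp c g \<in> Alg"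
proof -
  have "\<And>n. {w. pexp c g n w \<noteq> 0} \<subseteq> {replicate n g}" by (auto simp: pexp_def split: if_splits)
  then show ?thesis by (rule Alg_sub) simp
qed
lemma Alg_phi[simp]: "X \<in> Alg \<Longrightarrow> phi X \<in> Alg"
  unfolding Alg_iff
proof
  fix n assume a: "\<forall>n. finite {w. X n w \<noteq> 0}"
  have "{w. phi X n w \<noteq> 0} = map swg ` {w. X n w \<noteq> 0}"
    by (auto simp: phi_def image_iff; metis sw_sw)
  then show "finite {w. phi X n w \<noteq> 0}" using a by simp
qed

lemma Alg_pmul[simp]: "X \<in> Alg \<Longrightarrow> Y \<in> Alg \<Longrightarrow> pmul X Y \<in> Alg"
  unfolding Alg_iff
proof
  fix n assume a: "\<forall>n. finite {w. X n w \<noteq> 0}" "\<forall>n. finite {w. Y n w \<noteq> 0}"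
  have "{w. pmul X Y n w \<noteq> 0} \<subseteq> (\<Union>i\<in>{..n}. (\<lambda>(u,v). u @ v) ` ({w. X i w \<noteq> 0} \<times> {w. Y (n - i) w \<noteq> 0}))"
  proof
    fix w assume "w \<in> {w. pmul X Y n w \<noteq> 0}"
    then have "(\<Sum>i\<le>n. \<Sum>k\<le>length w. X i (take k w) * Y (n - i) (drop k w)) \<noteq> 0"
      by (simp add: pmul_def)
    then obtain i where i: "i \<le> n" "(\<Sum>k\<le>length w. X i (take k w) * Y (n - i) (drop k w)) \<noteq> 0"
      by (meson atMost_iff sum.not_neutral_contains_not_neutral)
    then obtain k where k: "X i (take k w) * Y (n - i) (drop k w) \<noteq> 0"
      by (meson sum.not_neutral_contains_not_neutral)
    have "(take k w, drop k w) \<in> {w. X i w \<noteq> 0} \<times> {w. Y (n - i) w \<noteq> 0}" using k by simp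
    then have "w \<in> (\<lambda>(u,v). u @ v) ` ({w. X i w \<noteq> 0} \<times> {w. Y (n - i) w \<noteq> 0})"
      by (rule image_eqI[rotated]) simp
    then show "w \<in> (\<Union>i\<in>{..n}. (\<lambda>(u,v). u @ v) ` ({w. X i w \<noteq> 0} \<times> {w. Y (n - i) w \<noteq> 0}))"
      using i(1) by blast
  qed
  moreover have "finite (\<Union>i\<in>{..n}. (\<lambda>(u,v). u @ v) ` ({w. X i w \<noteq> 0} \<times> {w. Y (n - i) w \<noteq> 0}))"
  proof (rule finite_UN_I)
    fix i show "finite ((\<lambda>(u,v). u @ v) ` ({w. X i w \<noteq> 0} \<times> {w. Y (n - i) w \<noteq> 0}))"
      using a by (intro finite_imageI finite_cartesian_product) auto
  qed simp
  ultimately show "finite {w. pmul X Y n w \<noteq> 0}" by (rule finite_subset)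
qed

definition mono0 :: "gen list \<Rightarrow> real \<Rightarrow> ncps" where
  "mono0 u c = (\<lambda>n v. if n = 0 \<and> v = u then c else 0)"

lemma td_iff: assumes "k \<le> length w" shows "(take k w = u \<and> drop k w = u') = (k = length u \<and> w = u @ u')"
proof
  assume h: "take k w = u \<and> drop k w = u'"
  then have "length u = k" using assms by auto
  moreover have "w = u @ u'" using h append_take_drop_id[of k w] by simp
  ultimately show "k = length u \<and> w = u @ u'" by simp
next
  assume "k = length u \<and> w = u @ u'" then show "take k w = u \<and> drop k w = u'" by simp
qed

lemma pmul_mono0: "pmul (mono0 u c) (mono0 u' d) = mono0 (u @ u') (c * d)"
proof (rule ext, rule ext)
  fix n w
  have "pmul (mono0 u c) (mono0 u' d) n w =
     (\<Sum>i\<le>n. \<Sum>k\<le>length w. (if i = 0 \<and> n = 0 \<and> k = length u \<and> w = u @ u' then c * d else 0))"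
    unfolding pmul_def mono0_def
    apply (intro sum.cong refl)
    subgoal for i k using td_iff[of k w u u'] by auto
    done
  also have "\<dots> = mono0 (u @ u') (c * d) n w"
    by (auto simp: mono0_def sum.delta if_distrib cong: if_cong)
  finally show "pmul (mono0 u c) (mono0 u' d) n w = mono0 (u @ u') (c * d) n w" .
qed

lemma swap_assign_mono0: "swap_assign g = mono0 [swg g] (sg g)"
  by (cases g) (auto simp: mono0_def pgen_def pscal_def fun_eq_iff)

lemma swap_assign_eq: "swap_assign = (\<lambda>g. mono0 [swg g] (sg g))"
  using swap_assign_mono0 by auto

lemma wordval_swap0: "wordval (\<lambda>g. mono0 [swg g] (sg g)) w = mono0 (map swg w) (wsg w)"
proof (induct w)
  case Nil then show ?case by (simp add: wordval_def mono0_def pone_def fun_eq_iff)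
next
  case (Cons g w)
  have "wordval (\<lambda>g. mono0 [swg g] (sg g)) (g # w) = pmul (mono0 [swg g] (sg g)) (wordval (\<lambda>g. mono0 [swg g] (sg g)) w)"
    by (simp add: wordval_def)
  then show ?case using Cons by (simp add: pmul_mono0)
qed

lemma wordval_swap: "wordval swap_assign w = mono0 (map swg w) (wsg w)"
  unfolding swap_assign_eq by (rule wordval_swap0)

lemma ext1_eq: assumes "F \<in> Alg" shows "ext1 swap_assign F = phi F"
proof (rule ext, rule ext)
  fix m v
  have fin: "\<And>n. finite {w. F n w \<noteq> 0}" using assms by (simp add: Alg_iff)
  have "ext1 swap_assign F m v = (\<Sum>n\<le>m. if n = m then (\<Sum>w\<in>{w. F n w \<noteq> 0}. if w = map swg v then F n w * wsg w else 0) else 0)"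
    unfolding ext1_def wordval_swap mono0_def
    by (intro sum.cong refl) (auto simp: sw_eq_iff intro!: sum.cong)
  also have "\<dots> = (\<Sum>w\<in>{w. F m w \<noteq> 0}. if w = map swg v then F m w * wsg w else 0)"
    by (simp add: sum.delta)
  also have "\<dots> = phi F m v"
    using fin[of m] by (simp add: sum.delta' phi_def)
  finally show "ext1 swap_assign F m v = phi F m v" .
qed



lemmas lin = rel_def pcomm_def pmul_padd_l pmul_padd_r pmul_psub_l pmul_psub_r
lemmas pw = fun_eq_iff padd_def psub_def pscal_def pzero_def


context fixes a b :: real begin
lemma E1: "phi (rel (pcomm gK gH) (pscal b (pmul (pexp (-1) Hg) gP))) = pscal 1 (rel (pcomm gK gP) (pscal b (pmul (pexp (-1) Pg) gH)))" by (simp add: lin, simp add: pw algebra_simps)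
lemma E2: "phi (rel (pcomm gK gP) (pscal a (pdivt (psub (pexp 1 Hg) pone)))) = pscal 1 (rel (pcomm gK gH) (pscal a (pdivt (psub (pexp 1 Pg) pone))))" by (simp add: lin, simp add: pw algebra_simps)
lemma E3: "phi (rel (pcomm gH gP) pzero) = pscal (-1) (rel (pcomm gH gP) pzero)" by (simp add: lin, simp add: pw algebra_simps)
lemma E4: "phi (rel (pcomm gK gD) pzero) = pscal 1 (rel (pcomm gK gD) pzero)" by (simp add: lin, simp add: pw algebra_simps)
lemma E5: "phi (rel (pcomm gD gH) (pdivt (psub pone (pexp (-1) Hg)))) = pscal 1 (rel (pcomm gD gP) (pdivt (psub pone (pexp (-1) Pg))))" by (simp add: lin, simp add: pw algebra_simps)
lemma E6: "phi (rel (pcomm gD gC1) (padd (pscal (-1) gC1) (pscal b (pmul ptau (pmul gD gD))))) = pscal (-1) (rel (pcomm gD gC2) (psub (pscal (-1) gC2) (pscal b (pmul ptau (pmul gD gD)))))" by (simp add: lin, simp add: pw algebra_simps)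
lemma E7: "phi (rel (pcomm gH gC1) (pscal (-2 * b) gD)) = pscal (-1) (rel (pcomm gP gC2) (pscal (2 * b) gD))" by (simp add: lin, simp add: pw algebra_simps)
lemma E8: "phi (rel (pcomm gD gP) gP) = pscal 1 (rel (pcomm gD gH) gH)" by (simp add: lin, simp add: pw algebra_simps)
lemma E9: "phi (rel (pcomm gD gC2) (pscal (-1) gC2)) = pscal (-1) (rel (pcomm gD gC1) (pscal (-1) gC1))" by (simp add: lin, simp add: pw algebra_simps)
lemma E10: "phi (rel (pcomm gP gC2) (pscal (2 * a) gD)) = pscal (-1) (rel (pcomm gH gC1) (pscal (-2 * a) gD))" by (simp add: lin, simp add: pw algebra_simps)
lemma E11: "phi (rel (pcomm gK gC1) (pscal b gC2)) = pscal (-1) (rel (pcomm gK gC2) (pscal b gC1))" by (simp add: lin, simp add: pw algebra_simps)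
lemma E12: "phi (rel (pcomm gK gC2) (psub (pscal a gC1) (pscal (a * b) (pmul ptau (pmul gD gD))))) = pscal (-1) (rel (pcomm gK gC1) (padd (pscal a gC2) (pscal (b * a) (pmul ptau (pmul gD gD)))))" by (simp add: lin, simp add: pw algebra_simps)
lemma E13: "phi (rel (pcomm gH gC2) (padd (pmul (pexp (-1) Hg) gK) (pmul gK (pexp (-1) Hg)))) = pscal (-1) (rel (pcomm gP gC1) (psub (pscal (-1) (pmul (pexp (-1) Pg) gK)) (pmul gK (pexp (-1) Pg))))" by (simp add: lin, simp add: pw algebra_simps)
lemma E14: "phi (rel (pcomm gP gC1) (psub (pscal (-2) gK) (pscal b (pmul ptau (padd (pmul gD gP) (pmul gP gD)))))) = pscal (-1) (rel (pcomm gH gC2) (padd (pscal 2 gK) (pscal b (pmul ptau (padd (pmul gD gH) (pmul gH gD))))))" by (simp add: lin, simp add: pw algebra_simps)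
lemma E15: "phi (rel (pcomm gC1 gC2) (pscal (- b) (pmul ptau (padd (pmul gD gC2) (pmul gC2 gD))))) = pscal (-1) (rel (pcomm gC1 gC2) (pscal (- b) (pmul ptau (padd (pmul gD gC1) (pmul gC1 gD)))))" by (simp add: lin, simp add: pw algebra_simps)
end



definition goodmap :: "ncps set \<Rightarrow> ncps set \<Rightarrow> bool" where
  "goodmap R R' = (\<forall>r\<in>R. \<exists>c r'. r' \<in> R' \<and> c \<in> {1,-1} \<and> phi r = pscal c r')"

lemma wit: "phi r = pscal c r' \<Longrightarrow> c \<in> {1,-1} \<Longrightarrow> r' \<in> R \<Longrightarrow> \<exists>c r'. r' \<in> R \<and> c \<in> {1,-1} \<and> phi r = pscal c r'"
  by blast

lemma pscal_pscal: "c \<in> {1,-1} \<Longrightarrow> pscal c (pscal c X) = X"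
  by (auto simp: pscal_def)

lemma inv: assumes "phi r = pscal c r'" "c \<in> {1,-1}" shows "phi r' = pscal c r"
proof -
  have "r = pscal c (phi r')" using arg_cong[OF assms(1), of phi] by simp
  then have "pscal c r = phi r'" using pscal_pscal[OF assms(2)] by simp
  then show ?thesis by simp
qed

lemma fwd: "goodmap (rels_tau a b) (rels_sigma b a)"
  unfolding goodmap_def rels_tau_def
  apply (simp only: ball_simps)
  apply (intro conjI wit[OF E1] wit[OF E2] wit[OF E3] wit[OF E4] wit[OF E5] wit[OF E6] wit[OF E7] wit[OF E8]
     wit[OF E9] wit[OF E10] wit[OF E11] wit[OF E12] wit[OF E13] wit[OF E14] wit[OF E15])
  apply (simp_all add: rels_sigma_def)
  done

lemma bwd: "goodmap (rels_sigma b a) (rels_tau a b)"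
  unfolding goodmap_def rels_sigma_def
  apply (simp only: ball_simps)
  apply (intro conjI wit[OF inv[OF E1]] wit[OF inv[OF E2]] wit[OF inv[OF E3]] wit[OF inv[OF E4]]
    wit[OF inv[OF E5]] wit[OF inv[OF E6]] wit[OF inv[OF E7]] wit[OF inv[OF E8]]
     wit[OF inv[OF E9]] wit[OF inv[OF E10]] wit[OF inv[OF E11]] wit[OF inv[OF E12]] wit[OF inv[OF E13]]
    wit[OF inv[OF E14]] wit[OF inv[OF E15]])
  apply (simp_all add: rels_tau_def)
  done

lemma padd_pzero[simp]: "padd pzero G = G" by (simp add: padd_def pzero_def)
lemma padd_assoc: "padd (padd T F) G = padd T (padd F G)" by (simp add: padd_def algebra_simps)
lemma pscal_pzero[simp]: "pscal c pzero = pzero" by (simp add: pscal_def pzero_def)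
lemma pscal_padd: "pscal c (padd X Y) = padd (pscal c X) (pscal c Y)" by (simp add: pscal_def padd_def algebra_simps)

lemma ideal_add: "F \<in> ideal_span R \<Longrightarrow> G \<in> ideal_span R \<Longrightarrow> padd F G \<in> ideal_span R"
  by (induct F rule: ideal_span.induct) (auto simp: padd_assoc intro: ideal_span.step)

lemma ideal_scal: "F \<in> ideal_span R \<Longrightarrow> pscal c F \<in> ideal_span R"
proof (induct F rule: ideal_span.induct)
  case zero then show ?case by (simp add: ideal_span.zero)
next
  case (step a r b F)
  have "pscal c (padd (pmul (pmul a r) b) F) = padd (pmul (pmul (pscal c a) r) b) (pscal c F)"
    by (simp add: pscal_padd)
  then show ?case
    apply (simp only:)
    apply (rule ideal_span.step)
    using step by auto
qed

lemma ideal_phi: "F \<in> ideal_span R \<Longrightarrow> goodmap R R' \<Longrightarrow> phi F \<in> ideal_span R'"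
proof (induct F rule: ideal_span.induct)
  case zero then show ?case by (simp add: ideal_span.zero)
next
  case (step a r b F)
  then obtain c r' where cr: "r' \<in> R'" "c \<in> {1,-1}" "phi r = pscal c r'" unfolding goodmap_def by blast
  have "phi (padd (pmul (pmul a r) b) F) = padd (pmul (pmul (pscal c (phi a)) r') (phi b)) (phi F)"
    using cr by simp
  then show ?case
    apply (simp only:)
    apply (rule ideal_span.step)
    using step cr by auto
qed

lemma tcl_add: "F \<in> tclosure (ideal_span R) \<Longrightarrow> G \<in> tclosure (ideal_span R) \<Longrightarrow> padd F G \<in> tclosure (ideal_span R)"
  unfolding tclosure_def
proof (clarsimp)
  fix N assume a: "F \<in> Alg" "\<forall>N. \<exists>G\<in>ideal_span R. \<forall>n<N. \<forall>w. F n w = G n w"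
    "G \<in> Alg" "\<forall>N. \<exists>Ga\<in>ideal_span R. \<forall>n<N. \<forall>w. G n w = Ga n w"
  obtain G1 where G1: "G1 \<in> ideal_span R" "\<forall>n<N. \<forall>w. F n w = G1 n w" using a(2) by blast
  obtain G2 where G2: "G2 \<in> ideal_span R" "\<forall>n<N. \<forall>w. G n w = G2 n w" using a(4) by blast
  show "\<exists>Ga\<in>ideal_span R. \<forall>n<N. \<forall>w. padd F G n w = Ga n w"
    using G1 G2 by (intro bexI[of _ "padd G1 G2"] ideal_add) (auto simp: padd_def)
qed

lemma tcl_scal: "F \<in> tclosure (ideal_span R) \<Longrightarrow> pscal c F \<in> tclosure (ideal_span R)"
  unfolding tclosure_def
proof (clarsimp)
  fix N assume a: "F \<in> Alg" "\<forall>N. \<exists>G\<in>ideal_span R. \<forall>n<N. \<forall>w. F n w = G n w"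
  obtain G1 where G1: "G1 \<in> ideal_span R" "\<forall>n<N. \<forall>w. F n w = G1 n w" using a(2) by blast
  show "\<exists>Ga\<in>ideal_span R. \<forall>n<N. \<forall>w. pscal c F n w = Ga n w"
    using G1 by (intro bexI[of _ "pscal c G1"] ideal_scal) (auto simp: pscal_def)
qed

lemma tcl_phi: assumes "F \<in> tclosure (ideal_span R)" "goodmap R R'" shows "phi F \<in> tclosure (ideal_span R')"
  unfolding tclosure_def
proof (intro CollectI conjI allI)
  show "phi F \<in> Alg" using assms(1) by (simp add: tclosure_def)
  fix N
  obtain G1 where G1: "G1 \<in> ideal_span R" "\<forall>n<N. \<forall>w. F n w = G1 n w"
    using assms(1) unfolding tclosure_def by blast
  show "\<exists>G\<in>ideal_span R'. \<forall>n<N. \<forall>w. phi F n w = G n w"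
    using G1 assms(2) by (intro bexI[of _ "phi G1"] ideal_phi) (auto simp: phi_def)
qed

lemma tcl_zero: "pzero \<in> tclosure (ideal_span R)"
  unfolding tclosure_def using ideal_span.zero by auto

lemma congr_equiv: "equiv Alg (congr R)"
proof (rule equivI)
  show "congr R \<subseteq> Alg \<times> Alg" by (auto simp: congr_def)
  show "refl_on Alg (congr R)"
  proof (rule refl_onI)
    fix x assume "x \<in> Alg"
    moreover have "psub x x = pzero" by (simp add: psub_def pzero_def)
    ultimately show "(x, x) \<in> congr R" by (simp add: congr_def relideal_def tcl_zero)
  qed
  show "sym (congr R)"
  proof (rule symI)
    fix x y assume "(x, y) \<in> congr R"
    moreover have "psub y x = pscal (-1) (psub x y)" by (simp add: psub_def pscal_def fun_eq_iff)
    ultimately show "(y, x) \<in> congr R" by (simp add: congr_def relideal_def tcl_scal)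
  qed
  show "trans (congr R)"
  proof (rule transI)
    fix x y z assume "(x, y) \<in> congr R" "(y, z) \<in> congr R"
    moreover have "psub x z = padd (psub x y) (psub y z)" by (simp add: psub_def padd_def fun_eq_iff)
    ultimately show "(x, z) \<in> congr R" by (simp add: congr_def relideal_def tcl_add)
  qed
qed

lemma congr_phi: assumes "(x, y) \<in> congr R" "goodmap R R'" shows "(phi x, phi y) \<in> congr R'"
proof -
  have "phi (psub x y) \<in> tclosure (ideal_span R')"
    using assms by (intro tcl_phi) (auto simp: congr_def relideal_def)
  then show ?thesis using assms(1) by (simp add: congr_def relideal_def)
qed



definition tphi :: "ncps2 \<Rightarrow> ncps2" where
  "tphi F = (\<lambda>n u v. wsg u * wsg v * F n (map swg u) (map swg v))"
definition scal2 :: "real \<Rightarrow> ncps2 \<Rightarrow> ncps2" where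
  "scal2 c F = (\<lambda>n u v. c * F n u v)"

lemma tphi_padd2[simp]: "tphi (padd2 X Y) = padd2 (tphi X) (tphi Y)"
  by (simp add: tphi_def padd2_def algebra_simps)
lemma tphi_psub2[simp]: "tphi (psub2 X Y) = psub2 (tphi X) (tphi Y)"
  by (simp add: tphi_def psub2_def algebra_simps)
lemma tphi_scal2[simp]: "tphi (scal2 c X) = scal2 c (tphi X)"
  by (simp add: tphi_def scal2_def algebra_simps)
lemma tphi_tens[simp]: "tphi (tens X Y) = tens (phi X) (phi Y)"
  by (simp add: tphi_def tens_def phi_def sum_distrib_left algebra_simps)
lemma tphi_pone2[simp]: "tphi pone2 = pone2"
  by (simp add: pone2_def)
lemma tens_pscal_l[simp]: "tens (pscal c X) Y = scal2 c (tens X Y)"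
  by (simp add: tens_def pscal_def scal2_def sum_distrib_left algebra_simps)
lemma tens_pscal_r[simp]: "tens X (pscal c Y) = scal2 c (tens X Y)"
  by (simp add: tens_def pscal_def scal2_def sum_distrib_left algebra_simps)
lemma pmul2_scal2_l[simp]: "pmul2 (scal2 c X) Y = scal2 c (pmul2 X Y)"
  by (simp add: pmul2_def scal2_def sum_distrib_left algebra_simps)
lemma pmul2_scal2_r[simp]: "pmul2 X (scal2 c Y) = scal2 c (pmul2 X Y)"
  by (simp add: pmul2_def scal2_def sum_distrib_left algebra_simps)
lemma scal2_scal2[simp]: "scal2 c (scal2 d X) = scal2 (c * d) X"
  by (simp add: scal2_def algebra_simps)

lemma tphi_pmul2[simp]: "tphi (pmul2 X Y) = pmul2 (tphi X) (tphi Y)"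
proof (rule ext, rule ext, rule ext)
  fix n u v
  show "tphi (pmul2 X Y) n u v = pmul2 (tphi X) (tphi Y) n u v"
    unfolding tphi_def pmul2_def
    apply (simp add: sum_distrib_left take_map drop_map)
    apply (intro sum.cong refl)
    subgoal for i k l
    proof -
      have "wsg u * wsg v = wsg (take k u) * wsg (drop k u) * (wsg (take l v) * wsg (drop l v))"
        by (simp add: wsg_take_drop)
      then show ?thesis by (simp add: algebra_simps)
    qed
    done
qed

lemma cop_gen: "tphi (cop_tau a b g) = scal2 (sg g) (cop_sigma b a (swg g))"
  apply (cases g)
  apply simp_all
  apply (simp_all add: fun_eq_iff padd2_def psub2_def scal2_def algebra_simps)
  done

lemma cop_word: "tphi (wordval2 (cop_tau a b) w) = scal2 (wsg w) (wordval2 (cop_sigma b a) (map swg w))"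
proof (induct w)
  case Nil then show ?case by (simp add: wordval2_def scal2_def)
next
  case (Cons g w)
  have "wordval2 (cop_tau a b) (g # w) = pmul2 (cop_tau a b g) (wordval2 (cop_tau a b) w)"
    by (simp add: wordval2_def)
  moreover have "wordval2 (cop_sigma b a) (map swg (g # w)) = pmul2 (cop_sigma b a (swg g)) (wordval2 (cop_sigma b a) (map swg w))"
    by (simp add: wordval2_def)
  ultimately show ?case using Cons by (simp add: cop_gen mult.commute)
qed



lemma Alg2_iff: "F \<in> Alg2 \<longleftrightarrow> (\<forall>n. finite {(u, v). F n u v \<noteq> 0})" by (simp add: Alg2_def)
lemma Alg2_sub: "(\<And>n. {(u, v). F n u v \<noteq> 0} \<subseteq> S n) \<Longrightarrow> (\<And>n. finite (S n)) \<Longrightarrow> F \<in> Alg2"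
  unfolding Alg2_iff by (meson finite_subset)

lemma Alg2_padd2[simp]: "X \<in> Alg2 \<Longrightarrow> Y \<in> Alg2 \<Longrightarrow> padd2 X Y \<in> Alg2"
  by (rule Alg2_sub[where S="\<lambda>n. {(u, v). X n u v \<noteq> 0} \<union> {(u, v). Y n u v \<noteq> 0}"])
     (auto simp: padd2_def Alg2_iff)
lemma Alg2_psub2[simp]: "X \<in> Alg2 \<Longrightarrow> Y \<in> Alg2 \<Longrightarrow> psub2 X Y \<in> Alg2"
  by (rule Alg2_sub[where S="\<lambda>n. {(u, v). X n u v \<noteq> 0} \<union> {(u, v). Y n u v \<noteq> 0}"])
     (auto simp: psub2_def Alg2_iff)

lemma Alg2_tens[simp]: assumes "X \<in> Alg" "Y \<in> Alg" shows "tens X Y \<in> Alg2"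
proof (rule Alg2_sub[where S="\<lambda>n. \<Union>i\<in>{..n}. {w. X i w \<noteq> 0} \<times> {w. Y (n - i) w \<noteq> 0}"])
  fix n
  show "{(u, v). tens X Y n u v \<noteq> 0} \<subseteq> (\<Union>i\<in>{..n}. {w. X i w \<noteq> 0} \<times> {w. Y (n - i) w \<noteq> 0})"
  proof (clarify)
    fix u v assume "tens X Y n u v \<noteq> 0"
    then obtain i where "i \<le> n" "X i u * Y (n - i) v \<noteq> 0"
      unfolding tens_def by (meson atMost_iff sum.not_neutral_contains_not_neutral)
    then show "(u, v) \<in> (\<Union>i\<in>{..n}. {w. X i w \<noteq> 0} \<times> {w. Y (n - i) w \<noteq> 0})" by auto
  qed
  show "finite (\<Union>i\<in>{..n}. {w. X i w \<noteq> 0} \<times> {w. Y (n - i) w \<noteq> 0})"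
    using assms by (intro finite_UN_I finite_cartesian_product) (auto simp: Alg_iff)
qed

lemma Alg2_scal2[simp]: "X \<in> Alg2 \<Longrightarrow> scal2 c X \<in> Alg2"
  by (rule Alg2_sub[where S="\<lambda>n. {(u, v). X n u v \<noteq> 0}"]) (auto simp: scal2_def Alg2_iff)

lemma Alg2_pone2[simp]: "pone2 \<in> Alg2" by (simp add: pone2_def)

definition cat2 :: "(gen list \<times> gen list) \<times> (gen list \<times> gen list) \<Rightarrow> gen list \<times> gen list" where
  "cat2 p = (fst (fst p) @ fst (snd p), snd (fst p) @ snd (snd p))"

lemma Alg2_pmul2[simp]: assumes "X \<in> Alg2" "Y \<in> Alg2" shows "pmul2 X Y \<in> Alg2"
proof (rule Alg2_sub[where S="\<lambda>n. \<Union>i\<in>{..n}. cat2 ` ({(u, v). X i u v \<noteq> 0} \<times> {(u, v). Y (n - i) u v \<noteq> 0})"])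
  fix n
  show "{(u, v). pmul2 X Y n u v \<noteq> 0} \<subseteq> (\<Union>i\<in>{..n}. cat2 ` ({(u, v). X i u v \<noteq> 0} \<times> {(u, v). Y (n - i) u v \<noteq> 0}))"
  proof (clarify)
    fix u v assume "pmul2 X Y n u v \<noteq> 0"
    then obtain i where i: "i \<le> n" "(\<Sum>k\<le>length u. \<Sum>l\<le>length v. X i (take k u) (take l v) * Y (n - i) (drop k u) (drop l v)) \<noteq> 0"
      unfolding pmul2_def by (meson atMost_iff sum.not_neutral_contains_not_neutral)
    then obtain k where "(\<Sum>l\<le>length v. X i (take k u) (take l v) * Y (n - i) (drop k u) (drop l v)) \<noteq> 0"
      by (meson sum.not_neutral_contains_not_neutral)
    then obtain l where kl: "X i (take k u) (take l v) * Y (n - i) (drop k u) (drop l v) \<noteq> 0"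
      by (meson sum.not_neutral_contains_not_neutral)
    have "((take k u, take l v), (drop k u, drop l v)) \<in> {(u, v). X i u v \<noteq> 0} \<times> {(u, v). Y (n - i) u v \<noteq> 0}"
      using kl by simp
    then have "(u, v) \<in> cat2 ` ({(u, v). X i u v \<noteq> 0} \<times> {(u, v). Y (n - i) u v \<noteq> 0})"
      by (rule image_eqI[rotated]) (simp add: cat2_def)
    then show "(u, v) \<in> (\<Union>i\<in>{..n}. cat2 ` ({(u, v). X i u v \<noteq> 0} \<times> {(u, v). Y (n - i) u v \<noteq> 0}))"
      using i(1) by blast
  qed
  show "finite (\<Union>i\<in>{..n}. cat2 ` ({(u, v). X i u v \<noteq> 0} \<times> {(u, v). Y (n - i) u v \<noteq> 0}))"
  proof (rule finite_UN_I)
    fix i show "finite (cat2 ` ({(u, v). X i u v \<noteq> 0} \<times> {(u, v). Y (n - i) u v \<noteq> 0}))"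
      using assms by (intro finite_imageI finite_cartesian_product) (auto simp: Alg2_iff)
  qed simp
qed

lemma Alg2_cop_tau: "cop_tau a b g \<in> Alg2"
  by (cases g) simp_all

lemma Alg2_wordval2: "wordval2 (cop_tau a b) w \<in> Alg2"
  by (induct w) (simp_all add: wordval2_def Alg2_cop_tau)

lemma Alg2_ext2: assumes "x \<in> Alg" shows "ext2 (cop_tau a b) x \<in> Alg2"
proof (rule Alg2_sub[where S="\<lambda>m. \<Union>n\<in>{..m}. \<Union>w\<in>{w. x n w \<noteq> 0}. {(u, v). wordval2 (cop_tau a b) w (m - n) u v \<noteq> 0}"])
  fix m
  show "{(u, v). ext2 (cop_tau a b) x m u v \<noteq> 0} \<subseteq> (\<Union>n\<in>{..m}. \<Union>w\<in>{w. x n w \<noteq> 0}. {(u, v). wordval2 (cop_tau a b) w (m - n) u v \<noteq> 0})"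
  proof (clarify)
    fix u v assume "ext2 (cop_tau a b) x m u v \<noteq> 0"
    then obtain n where n: "n \<le> m" "(\<Sum>w\<in>{w. x n w \<noteq> 0}. x n w * wordval2 (cop_tau a b) w (m - n) u v) \<noteq> 0"
      unfolding ext2_def by (meson atMost_iff sum.not_neutral_contains_not_neutral)
    then obtain w where "w \<in> {w. x n w \<noteq> 0}" "x n w * wordval2 (cop_tau a b) w (m - n) u v \<noteq> 0"
      by (meson sum.not_neutral_contains_not_neutral)
    then show "(u, v) \<in> (\<Union>n\<in>{..m}. \<Union>w\<in>{w. x n w \<noteq> 0}. {(u, v). wordval2 (cop_tau a b) w (m - n) u v \<noteq> 0})"
      using n(1) by auto
  qed
  show "finite (\<Union>n\<in>{..m}. \<Union>w\<in>{w. x n w \<noteq> 0}. {(u, v). wordval2 (cop_tau a b) w (m - n) u v \<noteq> 0})"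
    using assms Alg2_wordval2 by (intro finite_UN_I) (auto simp: Alg_iff Alg2_iff)
qed

lemma tens_mono0: "tens (mono0 u c) (mono0 v d) = (\<lambda>k a b. if k = 0 \<and> a = u \<and> b = v then c * d else 0)"
  by (auto simp: tens_def mono0_def fun_eq_iff intro!: sum.neutral)

lemma tensext_eq: assumes "F \<in> Alg2" shows "tensext swap_assign F = tphi F"
proof (rule ext, rule ext, rule ext)
  fix m a b
  have fin: "finite {(u, v). F m u v \<noteq> 0}" using assms by (simp add: Alg2_iff)
  have "tensext swap_assign F m a b = (\<Sum>n\<le>m. if n = m then (\<Sum>p\<in>{(u, v). F n u v \<noteq> 0}.
          if p = (map swg a, map swg b) then F n (fst p) (snd p) * (wsg (fst p) * wsg (snd p)) else 0) else 0)"
    unfolding tensext_def wordval_swap tens_mono0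
    by (intro sum.cong refl) (auto simp: sw_eq_iff intro!: sum.cong)
  also have "\<dots> = (\<Sum>p\<in>{(u, v). F m u v \<noteq> 0}.
          if p = (map swg a, map swg b) then F m (fst p) (snd p) * (wsg (fst p) * wsg (snd p)) else 0)"
    by (simp add: sum.delta)
  also have "\<dots> = tphi F m a b"
    using fin by (simp add: sum.delta' tphi_def)
  finally show "tensext swap_assign F m a b = tphi F m a b" .
qed



lemma supp_phi: "{w. phi x n w \<noteq> 0} = map swg ` {w. x n w \<noteq> 0}"
  by (auto simp: phi_def image_iff; metis sw_sw)

lemma coprod_eq: assumes "x \<in> Alg"
  shows "tphi (ext2 (cop_tau a b) x) = ext2 (cop_sigma b a) (phi x)"
proof (rule ext, rule ext, rule ext)
  fix m u v
  have cw: "\<And>w k. wsg u * wsg v * wordval2 (cop_tau a b) w k (map swg u) (map swg v)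
              = wsg w * wordval2 (cop_sigma b a) (map swg w) k u v"
  proof -
    fix w k
    have "tphi (wordval2 (cop_tau a b) w) k u v = scal2 (wsg w) (wordval2 (cop_sigma b a) (map swg w)) k u v"
      by (simp only: cop_word)
    then show "wsg u * wsg v * wordval2 (cop_tau a b) w k (map swg u) (map swg v)
              = wsg w * wordval2 (cop_sigma b a) (map swg w) k u v"
      by (simp add: tphi_def scal2_def)
  qed
  have "tphi (ext2 (cop_tau a b) x) m u v = (\<Sum>n\<le>m. \<Sum>w\<in>{w. x n w \<noteq> 0}.
           x n w * (wsg u * wsg v * wordval2 (cop_tau a b) w (m - n) (map swg u) (map swg v)))"
    unfolding tphi_def ext2_def
    by (simp only: sum_distrib_left) (intro sum.cong refl, simp add: algebra_simps)
  also have "\<dots> = (\<Sum>n\<le>m. \<Sum>w\<in>{w. x n w \<noteq> 0}. x n w * (wsg w * wordval2 (cop_sigma b a) (map swg w) (m - n) u v))"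
    by (simp only: cw)
  also have "\<dots> = (\<Sum>n\<le>m. \<Sum>w\<in>map swg ` {w. x n w \<noteq> 0}. phi x n w * wordval2 (cop_sigma b a) w (m - n) u v)"
  proof (rule sum.cong[OF refl])
    fix n
    have inj: "inj_on (map swg) {w. x n w \<noteq> 0}" by (rule inj_onI) simp
    show "(\<Sum>w\<in>{w. x n w \<noteq> 0}. x n w * (wsg w * wordval2 (cop_sigma b a) (map swg w) (m - n) u v)) =
          (\<Sum>w\<in>map swg ` {w. x n w \<noteq> 0}. phi x n w * wordval2 (cop_sigma b a) w (m - n) u v)"
      by (simp add: sum.reindex[OF inj] phi_def algebra_simps)
  qed
  also have "\<dots> = ext2 (cop_sigma b a) (phi x) m u v"
    by (simp only: ext2_def supp_phi)
  finally show "tphi (ext2 (cop_tau a b) x) m u v = ext2 (cop_sigma b a) (phi x) m u v" .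
qed

lemma pzero2_tensideal: "pzero2 \<in> tensideal R"
proof -
  have "pzero2 \<in> Alg2" by (simp add: Alg2_iff pzero2_def)
  then show ?thesis unfolding tensideal_def tclosure2_def using tideal_span.zero by blast
qed

lemma psub2_self: "psub2 X X = pzero2" by (simp add: psub2_def pzero2_def)

lemma ext1_img: assumes "X \<subseteq> Alg" shows "ext1 swap_assign ` X = phi ` X"
  using assms ext1_eq by (auto simp: image_def) (metis subsetD)+

lemma class_img: assumes "x \<in> Alg" "goodmap R R'"
  shows "congr R' `` (ext1 swap_assign ` (congr R `` {x})) = congr R' `` {phi x}"
proof -
  have sub: "congr R `` {x} \<subseteq> Alg" by (auto simp: congr_def)
  have eR: "equiv Alg (congr R)" and eR': "equiv Alg (congr R')" by (rule congr_equiv)+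
  have "congr R' `` (phi ` (congr R `` {x})) = congr R' `` {phi x}"
  proof
    show "congr R' `` (phi ` (congr R `` {x})) \<subseteq> congr R' `` {phi x}"
    proof
      fix z assume "z \<in> congr R' `` (phi ` (congr R `` {x}))"
      then obtain y where y: "(x, y) \<in> congr R" "(phi y, z) \<in> congr R'" by auto
      have "(phi x, phi y) \<in> congr R'" using congr_phi[OF y(1) assms(2)] .
      then have "(phi x, z) \<in> congr R'" using y(2) eR' by (meson equivE transE)
      then show "z \<in> congr R' `` {phi x}" by simp
    qed
    show "congr R' `` {phi x} \<subseteq> congr R' `` (phi ` (congr R `` {x}))"
    proof
      fix z assume "z \<in> congr R' `` {phi x}"
      moreover have "x \<in> congr R `` {x}" using eR assms(1) by (rule equiv_class_self)
      ultimately show "z \<in> congr R' `` (phi ` (congr R `` {x}))" by blast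
    qed
  qed
  then show ?thesis using ext1_img[OF sub] by simp
qed

theorem mainTheorem7:
  fixes \<mu> \<nu> :: real
  defines "\<phi> \<equiv> ext1 swap_assign"
  defines "Rt \<equiv> rels_tau \<mu> \<nu>"
  defines "Rs \<equiv> rels_sigma \<nu> \<mu>"
  shows
    \<comment> \<open>the extension is a continuous R[[t]]-algebra map on the free completed algebra\<close>
    "(\<forall>x\<in>Alg. \<phi> x \<in> Alg)
     \<and> \<phi> pone = pone
     \<and> (\<forall>x\<in>Alg. \<forall>y\<in>Alg. \<phi> (padd x y) = padd (\<phi> x) (\<phi> y))
     \<and> (\<forall>x\<in>Alg. \<forall>y\<in>Alg. \<phi> (pmul x y) = pmul (\<phi> x) (\<phi> y))
     \<and> (\<forall>x\<in>Alg. \<phi> (pmul ptau x) = pmul ptau (\<phi> x))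
     \<and> (\<forall>g. \<phi> (pgen g) = swap_assign g)
     \<comment> \<open>it descends to the presented algebras\<close>
     \<and> (\<forall>x y. (x, y) \<in> congr Rt \<longrightarrow> (\<phi> x, \<phi> y) \<in> congr Rs)
     \<comment> \<open>and the induced map U_tau(so_{mu,nu}) \<rightarrow> U_sigma(so_{nu,mu}) is bijective\<close>
     \<and> bij_betw (\<lambda>X. congr Rs `` (\<phi> ` X)) (presented Rt) (presented Rs)
     \<comment> \<open>and intertwines the coproducts: (phi \<otimes> phi) o Delta_tau = Delta_sigma o phi on U\<close>
     \<and> (\<forall>x\<in>Alg. psub2 (tensext swap_assign (ext2 (cop_tau \<mu> \<nu>) x))
                        (ext2 (cop_sigma \<nu> \<mu>) (\<phi> x)) \<in> tensideal Rs)"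
proof -
  have E: "\<And>x. x \<in> Alg \<Longrightarrow> \<phi> x = phi x" unfolding \<phi>_def by (rule ext1_eq)
  have gf: "goodmap Rt Rs" unfolding Rt_def Rs_def by (rule fwd)
  have gb: "goodmap Rs Rt" unfolding Rt_def Rs_def by (rule bwd)
  have eT: "equiv Alg (congr Rt)" and eS: "equiv Alg (congr Rs)" by (rule congr_equiv)+
  have c1: "\<forall>x\<in>Alg. \<phi> x \<in> Alg" using E by simp
  have c2: "\<phi> pone = pone" using E[OF Alg_pone] by simp
  have c3: "\<forall>x\<in>Alg. \<forall>y\<in>Alg. \<phi> (padd x y) = padd (\<phi> x) (\<phi> y)" using E by simp
  have c4: "\<forall>x\<in>Alg. \<forall>y\<in>Alg. \<phi> (pmul x y) = pmul (\<phi> x) (\<phi> y)" using E by simp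
  have c5: "\<forall>x\<in>Alg. \<phi> (pmul ptau x) = pmul ptau (\<phi> x)" using E by simp
  have c6: "\<forall>g. \<phi> (pgen g) = swap_assign g" using E by simp
  have c7: "\<forall>x y. (x, y) \<in> congr Rt \<longrightarrow> (\<phi> x, \<phi> y) \<in> congr Rs"
  proof (intro allI impI)
    fix x y assume xy: "(x, y) \<in> congr Rt"
    then have "x \<in> Alg" "y \<in> Alg" by (auto simp: congr_def)
    then show "(\<phi> x, \<phi> y) \<in> congr Rs" using congr_phi[OF xy gf] E by simp
  qed
  have cls: "\<And>x. x \<in> Alg \<Longrightarrow> congr Rs `` (\<phi> ` (congr Rt `` {x})) = congr Rs `` {phi x}"
    unfolding \<phi>_def using class_img[OF _ gf] by simp
  have c8: "bij_betw (\<lambda>X. congr Rs `` (\<phi> ` X)) (presented Rt) (presented Rs)"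
    unfolding bij_betw_def presented_def
  proof
    show "inj_on (\<lambda>X. congr Rs `` (\<phi> ` X)) (Alg // congr Rt)"
    proof (rule inj_onI)
      fix X Y assume X: "X \<in> Alg // congr Rt" and Y: "Y \<in> Alg // congr Rt"
        and eq: "congr Rs `` (\<phi> ` X) = congr Rs `` (\<phi> ` Y)"
      obtain x where x: "x \<in> Alg" "X = congr Rt `` {x}" using X by (rule quotientE)
      obtain y where y: "y \<in> Alg" "Y = congr Rt `` {y}" using Y by (rule quotientE)
      have "congr Rs `` {phi x} = congr Rs `` {phi y}" using eq x y cls by simp
      then have "(phi x, phi y) \<in> congr Rs" using eS y(1) by (intro eq_equiv_class) auto
      then have "(phi (phi x), phi (phi y)) \<in> congr Rt" using gb by (rule congr_phi)
      then have "(x, y) \<in> congr Rt" by simp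
      then show "X = Y" using x y eT by (simp add: equiv_class_eq)
    qed
    show "(\<lambda>X. congr Rs `` (\<phi> ` X)) ` (Alg // congr Rt) = Alg // congr Rs"
    proof
      show "(\<lambda>X. congr Rs `` (\<phi> ` X)) ` (Alg // congr Rt) \<subseteq> Alg // congr Rs"
      proof
        fix Z assume "Z \<in> (\<lambda>X. congr Rs `` (\<phi> ` X)) ` (Alg // congr Rt)"
        then obtain X where X: "X \<in> Alg // congr Rt" "Z = congr Rs `` (\<phi> ` X)" by blast
        obtain x where x: "x \<in> Alg" "X = congr Rt `` {x}" using X(1) by (rule quotientE)
        have "Z = congr Rs `` {phi x}" using X(2) x cls by simp
        then show "Z \<in> Alg // congr Rs" using x(1) by (simp add: quotientI)
      qed
      show "Alg // congr Rs \<subseteq> (\<lambda>X. congr Rs `` (\<phi> ` X)) ` (Alg // congr Rt)"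
      proof
        fix Z assume "Z \<in> Alg // congr Rs"
        then obtain z where z: "z \<in> Alg" "Z = congr Rs `` {z}" by (rule quotientE)
        have "congr Rs `` (\<phi> ` (congr Rt `` {phi z})) = Z" using cls[of "phi z"] z by simp
        moreover have "congr Rt `` {phi z} \<in> Alg // congr Rt" using z(1) by (simp add: quotientI)
        ultimately show "Z \<in> (\<lambda>X. congr Rs `` (\<phi> ` X)) ` (Alg // congr Rt)" by blast
      qed
    qed
  qed
  have c9: "\<forall>x\<in>Alg. psub2 (tensext swap_assign (ext2 (cop_tau \<mu> \<nu>) x))
                        (ext2 (cop_sigma \<nu> \<mu>) (\<phi> x)) \<in> tensideal Rs"
  proof
    fix x assume x: "x \<in> Alg"
    have "tensext swap_assign (ext2 (cop_tau \<mu> \<nu>) x) = ext2 (cop_sigma \<nu> \<mu>) (\<phi> x)"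
      using tensext_eq[OF Alg2_ext2[OF x]] coprod_eq[OF x] E[OF x] by simp
    then show "psub2 (tensext swap_assign (ext2 (cop_tau \<mu> \<nu>) x)) (ext2 (cop_sigma \<nu> \<mu>) (\<phi> x)) \<in> tensideal Rs"
      by (simp add: psub2_self pzero2_tensideal)
  qed
  show ?thesis using c1 c2 c3 c4 c5 c6 c7 c8 c9 by blast
qed

end
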